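(* Let $[a,b]$ be an interval of length $\ell=b-a+1$ and $\bar y_{a\to b}:=\frac1\ell\sum_{j=a}^by_j$. Let $x_j$ be the predictions of FLH-OGD. Case 1: if the offline optimal takes the form of Structure 1 on $[a,b]$ and $\bar y_{a\to b}\ge B$, then $\sum_{j=a}^b(y_j-x_j)^2-(y_j-u_j)^2\le 10(B+G)^2\log n-\ell(B-u_a)^2$. Case 2: if the offline optimal takes the form of Structure 2 on $[a,b]$ and $\bar y_{a\to b}\le -B$, then $\sum_{j=a}^b(y_j-x_j)^2-(y_j-u_j)^2\le 10(B+G)^2\log n-\ell(B+u_a)^2$.
   Context: Squared loss game: $n\ge 3$, $B\ge 1$, $G\ge B$; for $t=1,\dots,n$ the learner predicts $x_t\in[-B,B]$, then the adversary reveals $y_t\in[-G,G]$. $[a,b]=\{a,\dots,b\}$. FLH-OGD: For each $j\in[n]$ a base learner $E^j$ is started at time $j$; it runs projected online gradient descent on $[-B,B]$ on the losses $x\mapsto (y_t-x)^2$, $t\ge j$: its first prediction $x^{(j)}_j$ is a fixed point of $[-B,B]$, and $x^{(j)}_{t+1}=\Pi\big(x^{(j)}_t-\tfrac{1}{2\tau}\cdot 2(x^{(j)}_t-y_t)\big)$ with $\tau=t-j+1$, $\Pi$ the projection onto $[-B,B]$. The FLH meta-algorithm with learning rate $\zeta$ keeps a probability vector $v_t=(v_t^{(1)},\dots,v_t^{(t)})$, $v_1=(1)$; it predicts $x_t=\sum_{j\le t}v_t^{(j)}x^{(j)}_t$; after $y_t$ is revealed it sets $\hat v^{(i)}_{t+1}=v_t^{(i)}e^{-\zeta(y_t-x_t^{(i)})^2}/\sum_{j\le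 t}v_t^{(j)}e^{-\zeta(y_t-x_t^{(j)})^2}$ for $i\le t$, then $v^{(t+1)}_{t+1}=1/(t+1)$ and $v^{(i)}_{t+1}=(1-\tfrac1{t+1})\hat v^{(i)}_{t+1}$. FLH-OGD uses $\zeta=1/(2(G+B)^2)$. Offline optimal: given $C_n>0$, $u_1,\dots,u_n$ is an optimal solution of: minimize $\frac12\sum_{t=1}^n(y_t-\tilde u_t)^2$ subject to $\sum_{t=2}^{n}|\tilde u_t-\tilde u_{t-1}|\le C_n$ and $-B\le\tilde u_t\le B$; with optimal dual variables $\lambda\ge0$ (TV constraint) and $\gamma^\pm_t\ge0$ (box constraints) satisfying the KKT conditions: there are $s_t\in[-1,1]$ with $s_t=\mathrm{sign}(u_{t+1}-u_t)$ whenever $u_{t+1}\ne u_t$, $s_0=s_n=0$, $u_t-y_t=\lambda(s_t-s_{t-1})+\gamma_t^--\gamma_t^+$, and $\lambda(\sum_{t=2}^n|u_t-u_{t-1}|-C_n)=0$, $\gamma_t^-(u_t+B)=0$, $\gamma_t^+(u_t-B)=0$. Structure 1 on $[a,b]\subseteq\{2,\dots,n-1\}$: $u_j=u_a\in(-B,B)$ for all $j\in[a,b]$, $u_b>u_{b+1}$ and $u_a>u_{a-1}$. Structure 2 on $[a,b]\subseteq\{2,\dots,n-1\}$: $u_j=u_a\in(-B,B)$ for all $j\in[a,b]$, $u_b<u_{b+1}$ and $u_a<u_{a-1}$. *)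

theory Defs
  imports Complex_Main
begin

definition clip :: "real \<Rightarrow> real \<Rightarrow> real" where
  "clip B x = max (- B) (min B x)"

text \<open>Base learner E^j (projected OGD started at time j with initial point c):
  ogd_off y B c j k is its prediction at time j + k.\<close>
primrec ogd_off :: "(nat \<Rightarrow> real) \<Rightarrow> real \<Rightarrow> real \<Rightarrow> nat \<Rightarrow> nat \<Rightarrow> real" where
  "ogd_off y B c j 0 = c"
| "ogd_off y B c j (Suc k) =
     (let p = ogd_off y B c j k; t = j + k; tau = real (t - j + 1)
      in clip B (p - (1 / (2 * tau)) * (2 * (p - y t))))"

text \<open>Prediction x^{(j)}_t of base learner E^j at time t (meaningful for t >= j).\<close>
definition expert :: "(nat \<Rightarrow> real) \<Rightarrow> real \<Rightarrow> real \<Rightarrow> nat \<Rightarrow> nat \<Rightarrow> real" where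
  "expert y B c j t = ogd_off y B c j (t - j)"

fun flh_v :: "(nat \<Rightarrow> real) \<Rightarrow> real \<Rightarrow> real \<Rightarrow> real \<Rightarrow> nat \<Rightarrow> nat \<Rightarrow> real" where
  "flh_v y B c \<zeta> 0 i = 0"
| "flh_v y B c \<zeta> (Suc t) i =
     (if t = 0 then (if i = 1 then 1 else 0)
      else if i = Suc t then 1 / real (Suc t)
      else if 1 \<le> i \<and> i \<le> t then
        (1 - 1 / real (Suc t)) *
        (flh_v y B c \<zeta> t i * exp (- \<zeta> * (y t - expert y B c i t)\<^sup>2) /
         (\<Sum>j\<in>{1..t}. flh_v y B c \<zeta> t j * exp (- \<zeta> * (y t - expert y B c j t)\<^sup>2)))
      else 0)"

definition flh_pred :: "(nat \<Rightarrow> real) \<Rightarrow> real \<Rightarrow> real \<Rightarrow> real \<Rightarrow> nat \<Rightarrow> real" where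
  "flh_pred y B c \<zeta> t = (\<Sum>j\<in>{1..t}. flh_v y B c \<zeta> t j * expert y B c j t)"

definition flh_ogd :: "(nat \<Rightarrow> real) \<Rightarrow> real \<Rightarrow> real \<Rightarrow> real \<Rightarrow> nat \<Rightarrow> real" where
  "flh_ogd y B G c t = flh_pred y B c (1 / (2 * (G + B)\<^sup>2)) t"

definition feasible :: "nat \<Rightarrow> real \<Rightarrow> real \<Rightarrow> (nat \<Rightarrow> real) \<Rightarrow> bool" where
  "feasible n B Cn w \<longleftrightarrow>
     (\<Sum>t\<in>{2..n}. \<bar>w t - w (t - 1)\<bar>) \<le> Cn \<and> (\<forall>t\<in>{1..n}. - B \<le> w t \<and> w t \<le> B)"

definition obj :: "nat \<Rightarrow> (nat \<Rightarrow> real) \<Rightarrow> (nat \<Rightarrow> real) \<Rightarrow> real" where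
  "obj n y w = (1/2) * (\<Sum>t\<in>{1..n}. (y t - w t)\<^sup>2)"

definition offline_opt :: "nat \<Rightarrow> real \<Rightarrow> real \<Rightarrow> (nat \<Rightarrow> real) \<Rightarrow> (nat \<Rightarrow> real) \<Rightarrow> bool" where
  "offline_opt n B Cn y u \<longleftrightarrow>
     feasible n B Cn u \<and> (\<forall>w. feasible n B Cn w \<longrightarrow> obj n y u \<le> obj n y w)"

text \<open>KKT conditions with dual variables lam (TV constraint), gm, gp (box constraints)
  and subgradient signs s.\<close>
definition kkt :: "nat \<Rightarrow> real \<Rightarrow> real \<Rightarrow> (nat \<Rightarrow> real) \<Rightarrow> (nat \<Rightarrow> real) \<Rightarrow> real \<Rightarrow>
                   (nat \<Rightarrow> real) \<Rightarrow> (nat \<Rightarrow> real) \<Rightarrow> (nat \<Rightarrow> real) \<Rightarrow> bool" where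
  "kkt n B Cn y u lam gm gp s \<longleftrightarrow>
     lam \<ge> 0 \<and>
     (\<forall>t\<in>{1..n}. gm t \<ge> 0 \<and> gp t \<ge> 0) \<and>
     (\<forall>t\<in>{0..n}. - 1 \<le> s t \<and> s t \<le> 1) \<and>
     (\<forall>t\<in>{1..<n}. u (t + 1) \<noteq> u t \<longrightarrow> s t = sgn (u (t + 1) - u t)) \<and>
     s 0 = 0 \<and> s n = 0 \<and>
     (\<forall>t\<in>{1..n}. u t - y t = lam * (s t - s (t - 1)) + gm t - gp t) \<and>
     lam * ((\<Sum>t\<in>{2..n}. \<bar>u t - u (t - 1)\<bar>) - Cn) = 0 \<and>
     (\<forall>t\<in>{1..n}. gm t * (u t + B) = 0 \<and> gp t * (u t - B) = 0)"

definition structure1 :: "nat \<Rightarrow> real \<Rightarrow> (nat \<Rightarrow> real) \<Rightarrow> nat \<Rightarrow> nat \<Rightarrow> bool" where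
  "structure1 n B u a b \<longleftrightarrow>
     2 \<le> a \<and> a \<le> b \<and> b \<le> n - 1 \<and>
     (\<forall>j\<in>{a..b}. u j = u a) \<and> - B < u a \<and> u a < B \<and>
     u b > u (b + 1) \<and> u a > u (a - 1)"

definition structure2 :: "nat \<Rightarrow> real \<Rightarrow> (nat \<Rightarrow> real) \<Rightarrow> nat \<Rightarrow> nat \<Rightarrow> bool" where
  "structure2 n B u a b \<longleftrightarrow>
     2 \<le> a \<and> a \<le> b \<and> b \<le> n - 1 \<and>
     (\<forall>j\<in>{a..b}. u j = u a) \<and> - B < u a \<and> u a < B \<and>
     u b < u (b + 1) \<and> u a < u (a - 1)"

end

theory Submission
  imports Defs "HOL-Analysis.Analysis"
begin


lemma conc_exp:
  fixes al yy R :: real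
  assumes "al > 0" "2*al*R^2 \<le> 1"
  shows "convex_on {yy-R..yy+R} (\<lambda>x. - exp (- al * (yy - x)^2))"
proof (rule f''_ge0_imp_convex[where f' = "\<lambda>x. - exp (- al * (yy - x)^2) * (2*al*(yy-x))"
   and f'' = "\<lambda>x. exp (- al * (yy - x)^2) * (2*al - 4*al^2*(yy-x)^2)"])
  show "convex {yy-R..yy+R}" by simp
  fix x assume x: "x \<in> {yy-R..yy+R}"
  show "DERIV (\<lambda>x. - exp (- al * (yy - x)^2)) x :> - exp (- al * (yy - x)^2) * (2*al*(yy-x))"
    by (rule derivative_eq_intros refl | simp add: power2_eq_square algebra_simps)+
  show "DERIV (\<lambda>x. - exp (- al * (yy - x)^2) * (2*al*(yy-x))) x :> exp (- al * (yy - x)^2) * (2*al - 4*al^2*(yy-x)^2)"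
    by (rule derivative_eq_intros refl | simp add: power2_eq_square algebra_simps)+
  have "\<bar>yy-x\<bar> \<le> R" using x by auto
  hence "\<bar>yy-x\<bar>^2 \<le> R^2" by (intro power_mono) auto
  hence "(yy-x)^2 \<le> R^2" by simp
  hence "al*(yy-x)^2 \<le> al*R^2" using assms by (intro mult_left_mono) auto
  have "4*al^2*(yy-x)^2 = 4*al*(al*(yy-x)^2)" by (simp add: power2_eq_square)
  also have "\<dots> \<le> 4*al*(al*R^2)" using \<open>al*(yy-x)^2 \<le> al*R^2\<close> assms by (intro mult_left_mono) auto
  also have "\<dots> = 2*al*(2*al*R^2)" by simp
  also have "\<dots> \<le> 2*al*1" using assms by (intro mult_left_mono) auto
  finally have "4*al^2*(yy-x)^2 \<le> 2*al" by simp
  thus "0 \<le> exp (- al * (yy - x)^2) * (2*al - 4*al^2*(yy-x)^2)" by simp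
qed



lemma flh_v_Suc_le:
  assumes "t \<ge> 1" "1 \<le> i" "i \<le> t"
  shows "flh_v y B c z (Suc t) i = (1 - 1 / real (Suc t)) *
        (flh_v y B c z t i * exp (- z * (y t - expert y B c i t)\<^sup>2) /
         (\<Sum>j\<in>{1..t}. flh_v y B c z t j * exp (- z * (y t - expert y B c j t)\<^sup>2)))"
  using assms by simp

lemma flh_v_new:
  assumes "t \<ge> 1"
  shows "flh_v y B c z (Suc t) (Suc t) = 1 / real (Suc t)"
  using assms by simp

lemma wprop:
  assumes "t \<ge> 1"
  shows "(\<forall>i. 0 \<le> flh_v y B c z t i) \<and> (\<Sum>i\<in>{1..t}. flh_v y B c z t i) = 1"
  using assms
proof (induction t)
  case 0 then show ?case by simp
next
  case (Suc t)
  show ?case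
  proof (cases "t = 0")
    case True
    then show ?thesis by simp
  next
    case False
    hence t1: "t \<ge> 1" by simp
    define V where "V = flh_v y B c z t"
    define e where "e = (\<lambda>j. exp (- z * (y t - expert y B c j t)\<^sup>2))"
    define Z where "Z = (\<Sum>j\<in>{1..t}. V j * e j)"
    from Suc.IH[OF t1] have nn: "\<And>i. 0 \<le> V i" and s1: "sum V {1..t} = 1"
      unfolding V_def by auto
    have "\<exists>j\<in>{1..t}. V j \<noteq> 0"
    proof (rule ccontr)
      assume "\<not> ?thesis"
      hence "sum V {1..t} = 0" by simp
      with s1 show False by simp
    qed
    then obtain j where j: "j \<in> {1..t}" "V j > 0" using nn by (metis less_eq_real_def)
    have "0 < V j * e j" using j(2) unfolding e_def by simp
    also have "V j * e j \<le> Z" unfolding Z_def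
      by (rule member_le_sum[OF j(1)]) (auto simp: nn e_def)
    finally have Zp: "Z > 0" .
    have eq: "\<And>i. i \<in> {1..t} \<Longrightarrow> flh_v y B c z (Suc t) i = (1 - 1 / real (Suc t)) * (V i * e i / Z)"
      using t1 unfolding V_def e_def Z_def by simp
    have "(\<Sum>i\<in>{1..Suc t}. flh_v y B c z (Suc t) i) =
          (\<Sum>i\<in>{1..t}. flh_v y B c z (Suc t) i) + flh_v y B c z (Suc t) (Suc t)"
      by simp
    also have "(\<Sum>i\<in>{1..t}. flh_v y B c z (Suc t) i) = (\<Sum>i\<in>{1..t}. (1 - 1 / real (Suc t)) * (V i * e i / Z))"
      using eq by (rule sum.cong[OF refl])
    also have "\<dots> = (1 - 1 / real (Suc t)) * ((\<Sum>i\<in>{1..t}. V i * e i) / Z)"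
      by (simp only: sum_distrib_left[symmetric] sum_divide_distrib[symmetric])
    also have "(\<Sum>i\<in>{1..t}. V i * e i) = Z" unfolding Z_def ..
    also have "flh_v y B c z (Suc t) (Suc t) = 1 / real (Suc t)" using t1 by simp
    finally have S: "(\<Sum>i\<in>{1..Suc t}. flh_v y B c z (Suc t) i) = 1" using Zp by simp
    have "\<forall>i. 0 \<le> flh_v y B c z (Suc t) i"
    proof
      fix i
      show "0 \<le> flh_v y B c z (Suc t) i"
      proof (cases "i \<in> {1..t}")
        case True
        have "0 \<le> (1 - 1 / real (Suc t)) * (V i * e i / Z)"
          using nn[of i] Zp by (intro mult_nonneg_nonneg divide_nonneg_pos) (auto simp: e_def field_simps)
        then show ?thesis using eq[OF True] by simp
      next
        case False
        then show ?thesis using t1 by auto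
      qed
    qed
    with S show ?thesis by simp
  qed
qed


lemma ogd_bound:
  assumes "- B \<le> c" "c \<le> B"
  shows "- B \<le> ogd_off y B c j k \<and> ogd_off y B c j k \<le> B"
  using assms by (induction k) (auto simp: clip_def Let_def)

lemma expert_bound:
  assumes "- B \<le> c" "c \<le> B"
  shows "\<bar>expert y B c j t\<bar> \<le> B"
  using ogd_bound[OF assms, of y j "t - j"] unfolding expert_def by (simp add: abs_le_iff)

lemma Zpos:
  assumes "t \<ge> 1" "\<And>j. e j > (0::real)"
  shows "0 < (\<Sum>j\<in>{1..t}. flh_v y B c z t j * e j)"
proof -
  define V where "V = flh_v y B c z t"
  from wprop[OF assms(1)] have nn: "\<And>i. 0 \<le> V i" and s1: "sum V {1..t} = 1"
    unfolding V_def by auto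
  have "\<exists>j\<in>{1..t}. V j \<noteq> 0"
  proof (rule ccontr)
    assume "\<not> ?thesis"
    hence "sum V {1..t} = 0" by simp
    with s1 show False by simp
  qed
  then obtain j where j: "j \<in> {1..t}" "V j > 0" using nn by (metis less_eq_real_def)
  have "0 < V j * e j" using j(2) assms(2)[of j] by simp
  also have "V j * e j \<le> (\<Sum>j\<in>{1..t}. V j * e j)"
    by (rule member_le_sum[OF j(1)]) (auto simp: nn assms(2) less_imp_le)
  finally show ?thesis unfolding V_def .
qed

lemma jensen_step:
  fixes G B :: real
  assumes "t \<ge> 1" "\<bar>y t\<bar> \<le> G" "- B \<le> c" "c \<le> B" "G + B > 0"
  defines "al \<equiv> 1 / (2 * (G + B)\<^sup>2)"
  shows "(\<Sum>j\<in>{1..t}. flh_v y B c al t j * exp (- al * (y t - expert y B c j t)\<^sup>2))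
         \<le> exp (- al * (y t - flh_pred y B c al t)\<^sup>2)"
proof -
  have alp: "al > 0" unfolding al_def using assms by simp
  have "2*al*(G+B)^2 = 1" unfolding al_def using assms by simp
  hence cv: "convex_on {y t - (G+B)..y t + (G+B)} (\<lambda>x. - exp (- al * (y t - x)^2))"
    using conc_exp[OF alp] by simp
  from wprop[OF assms(1)] have nn: "\<And>i. 0 \<le> flh_v y B c al t i" and s1: "(\<Sum>i\<in>{1..t}. flh_v y B c al t i) = 1"
    by auto
  have inC: "\<And>j. expert y B c j t \<in> {y t - (G+B)..y t + (G+B)}"
  proof -
    fix j
    have "\<bar>expert y B c j t\<bar> \<le> B" by (rule expert_bound[OF assms(3,4)])
    thus "expert y B c j t \<in> {y t - (G+B)..y t + (G+B)}" using assms(2) by (auto simp: abs_le_iff)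
  qed
  have "- exp (- al * (y t - (\<Sum>j\<in>{1..t}. flh_v y B c al t j *\<^sub>R expert y B c j t))^2)
        \<le> (\<Sum>j\<in>{1..t}. flh_v y B c al t j * - exp (- al * (y t - expert y B c j t)^2))"
    by (rule convex_on_sum[OF _ _ cv s1]) (use assms(1) nn inC in auto)
  thus ?thesis unfolding flh_pred_def by (simp add: sum_negf)
qed



lemma meta_exp:
  fixes G B :: real
  assumes "a \<ge> 2" "a \<le> m" "m \<le> n" "\<forall>t\<in>{1..n}. \<bar>y t\<bar> \<le> G" "- B \<le> c" "c \<le> B" "G + B > 0"
  defines "al \<equiv> 1 / (2 * (G + B)\<^sup>2)"
  shows "exp (al * (\<Sum>t\<in>{a..<m}. (y t - flh_pred y B c al t)\<^sup>2 - (y t - expert y B c a t)\<^sup>2))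
         \<le> real m * flh_v y B c al m a"
  using assms(2,3)
proof (induction m rule: dec_induct)
  case base
  obtain a' where a': "a = Suc a'" "a' \<ge> 1" using assms(1) by (cases a) auto
  have "flh_v y B c al a a = 1 / real a" using a' by simp
  then show ?case using assms(1) by simp
next
  case (step m)
  have m1: "m \<ge> 1" using step.hyps assms(1) by simp
  have ym: "\<bar>y m\<bar> \<le> G" using assms(4) step.prems m1 by auto
  define V where "V = flh_v y B c al m"
  define e where "e = (\<lambda>j. exp (- al * (y m - expert y B c j m)\<^sup>2))"
  define Z where "Z = (\<Sum>j\<in>{1..m}. V j * e j)"
  define L where "L = (y m - flh_pred y B c al m)\<^sup>2"
  define S where "S = (\<Sum>t\<in>{a..<m}. (y t - flh_pred y B c al t)\<^sup>2 - (y t - expert y B c a t)\<^sup>2)"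
  have IH: "exp (al * S) \<le> real m * V a" using step.IH step.prems unfolding S_def V_def by simp
  have Zp: "Z > 0" unfolding Z_def V_def e_def by (rule Zpos[OF m1]) simp
  have ZL: "Z \<le> exp (- al * L)" unfolding Z_def V_def e_def L_def al_def
    by (rule jensen_step[of m y G B c, OF m1 ym assms(5,6,7)])
  have Vn: "0 \<le> V a" unfolding V_def using wprop[OF m1] by auto
  have ea: "a \<in> {1..m}" using step.hyps assms(1) by auto
  have eqf: "flh_v y B c al (Suc m) a = (1 - 1/real (Suc m)) * (V a * e a / Z)"
    using flh_v_Suc_le[OF m1, of a y B c al] ea unfolding V_def e_def Z_def by simp
  have sm: "real (Suc m) * (1 - 1/real(Suc m)) = real m" by (simp add: field_simps)
  have eq: "real (Suc m) * flh_v y B c al (Suc m) a = real m * V a * e a / Z"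
    unfolding eqf mult.assoc[symmetric] sm by simp
  have "exp (al * (\<Sum>t\<in>{a..<Suc m}. (y t - flh_pred y B c al t)\<^sup>2 - (y t - expert y B c a t)\<^sup>2))
        = exp (al * S) * (e a / exp (- al * L))"
    using step.hyps unfolding S_def e_def L_def
    by (simp add: distrib_left exp_add exp_diff exp_minus field_simps)
  also have "\<dots> \<le> (real m * V a) * (e a / exp (- al * L))"
    by (rule mult_right_mono[OF IH]) (simp add: e_def)
  also have "\<dots> \<le> (real m * V a) * (e a / Z)"
    using Zp ZL Vn by (intro mult_left_mono divide_left_mono) (auto simp: e_def)
  also have "\<dots> = real (Suc m) * flh_v y B c al (Suc m) a" using eq by simp
  finally show ?case .
qed



lemma key_ineq:
  fixes M p y' w K D' :: real
  assumes "M > 0" "(p - y')^2 \<le> K" "D' \<le> ((p - w) - (p - y')/M)^2"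
  shows "(y' - p)^2 - (y' - w)^2 \<le> (M - 1) * (p - w)^2 - M * D' + K / M"
proof -
  define g where "g = p - y'"
  define q where "q = p - w"
  have "M * D' \<le> M * (q - g/M)^2" using assms unfolding g_def q_def by (intro mult_left_mono) auto
  also have "M * (q - g/M)^2 = M*q^2 - 2*q*g + g^2/M" using assms(1)
    by (simp add: power2_eq_square field_simps)
  finally have 1: "M * D' \<le> M*q^2 - 2*q*g + g^2/M" .
  have 2: "g^2/M \<le> K/M" using assms unfolding g_def by (intro divide_right_mono) auto
  have 3: "(y' - p)^2 - (y' - w)^2 = 2*q*g - q^2" unfolding g_def q_def by (simp add: power2_eq_square algebra_simps)
  show ?thesis unfolding 3 using 1 2 unfolding q_def[symmetric] by (simp add: algebra_simps)
qed

lemma aux_suc: "- real (Suc m) * (X::real) = - ((real m + 1) * X)" by (simp add: algebra_simps)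

lemma comb:
  fixes S M Q K H d D :: real
  assumes "S \<le> - M*Q + K*H" "d \<le> (M+1-1)*Q - (M+1)*D + K/(M+1)"
  shows "S + d \<le> -(1+M)*D + K*(H + 1/(M+1))"
proof -
  have "K*(H + 1/(M+1)) = K*H + K/(M+1)" by (simp add: distrib_left)
  moreover have "(M+1-1)*Q = M*Q" by simp
  moreover have "-(1+M)*D = - ((M+1)*D)" by (simp only: mult_minus_left add.commute)
  moreover have "- M*Q = -(M*Q)" by simp
  ultimately show ?thesis using assms by linarith
qed

lemma clip_nonexp:
  assumes "\<bar>w\<bar> \<le> B"
  shows "(clip B z - w)^2 \<le> (z - w)^2"
proof -
  have "\<bar>clip B z - w\<bar> \<le> \<bar>z - w\<bar>" using assms by (auto simp: clip_def abs_le_iff)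
  hence "\<bar>clip B z - w\<bar>^2 \<le> \<bar>z - w\<bar>^2" by (intro power_mono) auto
  thus ?thesis by simp
qed

lemma ogd_regret:
  fixes B G c w :: real
  assumes "\<bar>w\<bar> \<le> B" "- B \<le> c" "c \<le> B"
  shows "(\<forall>t. a \<le> t \<and> t < a + m \<longrightarrow> \<bar>y t\<bar> \<le> G) \<longrightarrow>
    (\<Sum>t\<in>{a..<a+m}. (y t - expert y B c a t)^2 - (y t - w)^2)
      \<le> - real m * (ogd_off y B c a m - w)^2 + (B+G)^2 * (\<Sum>k<m. 1 / (real k + 1))"
proof (induction m)
  case 0 then show ?case by simp
next
  case (Suc m)
  show ?case
  proof
    assume H: "\<forall>t. a \<le> t \<and> t < a + Suc m \<longrightarrow> \<bar>y t\<bar> \<le> G"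
    hence IH: "(\<Sum>t\<in>{a..<a+m}. (y t - expert y B c a t)^2 - (y t - w)^2)
      \<le> - real m * (ogd_off y B c a m - w)^2 + (B+G)^2 * (\<Sum>k<m. 1 / (real k + 1))"
      using Suc.IH by auto
    define p where "p = ogd_off y B c a m"
    define y' where "y' = y (a + m)"
    have yb: "\<bar>y'\<bar> \<le> G" using H unfolding y'_def by auto
    have pb: "\<bar>p\<bar> \<le> B" using ogd_bound[OF assms(2,3), of y a m] unfolding p_def by (simp add: abs_le_iff)
    have K: "(p - y')^2 \<le> (B+G)^2"
    proof -
      have "\<bar>p - y'\<bar> \<le> B + G" using yb pb by (simp add: abs_le_iff)
      hence "\<bar>p - y'\<bar>^2 \<le> (B+G)^2" by (intro power_mono) auto
      thus ?thesis by simp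
    qed
    have nxt: "ogd_off y B c a (Suc m) = clip B (p - (p - y') / (real m + 1))"
    proof -
      have arg: "p - 1 / (2 * (real m + 1)) * (2 * (p - y')) = p - (p - y') / (real m + 1)"
        by (simp add: field_simps)
      have "ogd_off y B c a (Suc m) = clip B (p - 1 / (2 * (real m + 1)) * (2 * (p - y')))"
      proof -
        have r: "real (a + m - a + 1) = real m + 1" by simp
        show ?thesis unfolding p_def y'_def by (simp only: ogd_off.simps Let_def r)
      qed
      thus ?thesis unfolding arg .
    qed
    have D: "(ogd_off y B c a (Suc m) - w)^2 \<le> ((p - w) - (p - y')/(real m + 1))^2"
      unfolding nxt using clip_nonexp[OF assms(1), of "p - (p - y') / (real m + 1)"] by (simp add: algebra_simps)
    have step: "(y' - p)^2 - (y' - w)^2 \<le> (real m + 1 - 1) * (p - w)^2 - (real m + 1) * (ogd_off y B c a (Suc m) - w)^2 + (B+G)^2 / (real m + 1)"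
      by (rule key_ineq[OF _ K D]) simp
    have ex: "expert y B c a (a + m) = p" unfolding expert_def p_def by simp
    have "(\<Sum>t\<in>{a..<a+Suc m}. (y t - expert y B c a t)^2 - (y t - w)^2)
        = (\<Sum>t\<in>{a..<a+m}. (y t - expert y B c a t)^2 - (y t - w)^2) + ((y' - p)^2 - (y' - w)^2)"
      unfolding y'_def ex[symmetric] by simp
    also have "\<dots> \<le> - real (Suc m) * (ogd_off y B c a (Suc m) - w)^2 + (B+G)^2 * (\<Sum>k<Suc m. 1 / (real k + 1))"
    proof -
      have hs: "(\<Sum>k<Suc m. 1 / (real k + 1)) = (\<Sum>k<m. 1 / (real k + 1)) + 1/(real m + 1)" by simp
      show ?thesis unfolding hs of_nat_Suc
        by (rule comb[OF IH[unfolded p_def[symmetric]] step])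
    qed
    finally show "(\<Sum>t\<in>{a..<a+Suc m}. (y t - expert y B c a t)^2 - (y t - w)^2)
      \<le> - real (Suc m) * (ogd_off y B c a (Suc m) - w)^2 + (B+G)^2 * (\<Sum>k<Suc m. 1 / (real k + 1))" .
  qed
qed

lemma harm_bound:
  assumes "m \<ge> 1"
  shows "(\<Sum>k<m. 1 / (real k + 1)) \<le> 1 + ln (real m)"
  using assms
proof (induction m rule: dec_induct)
  case base then show ?case by simp
next
  case (step m)
  have "ln (real m / (real m + 1)) \<le> real m / (real m + 1) - 1"
    using step.hyps by (intro ln_le_minus_one) auto
  also have "\<dots> = - 1 / (real m + 1)" by (simp add: field_simps)
  finally have "1 / (real m + 1) \<le> ln (real m + 1) - ln (real m)"
    using step.hyps by (simp add: ln_div)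
  thus ?case using step.IH by (simp add: add.commute)
qed



lemma regret_fixed:
  fixes B G c w :: real and y :: "nat \<Rightarrow> real"
  assumes "n \<ge> 3" "B \<ge> 1" "G \<ge> B" "\<forall>t\<in>{1..n}. \<bar>y t\<bar> \<le> G" "- B \<le> c" "c \<le> B"
    and "\<bar>w\<bar> \<le> B" "2 \<le> a" "a \<le> b" "b \<le> n - 1"
  shows "(\<Sum>j\<in>{a..b}. (y j - flh_ogd y B G c j)\<^sup>2 - (y j - w)\<^sup>2) \<le> 10 * (B + G)\<^sup>2 * ln (real n)"
proof -
  define al where "al = 1 / (2 * (G + B)\<^sup>2)"
  define K where "K = (B + G)^2"
  have GB: "G + B > 0" using assms by simp
  have alK: "al = 1 / (2 * K)" unfolding al_def K_def by (simp add: add.commute)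
  have Kp: "K > 0" unfolding K_def using GB by simp
  have F: "\<And>j. flh_ogd y B G c j = flh_pred y B c al j" unfolding flh_ogd_def al_def ..
  define S1 where "S1 = (\<Sum>j\<in>{a..b}. (y j - flh_pred y B c al j)\<^sup>2 - (y j - expert y B c a j)\<^sup>2)"
  define S2 where "S2 = (\<Sum>j\<in>{a..b}. (y j - expert y B c a j)\<^sup>2 - (y j - w)\<^sup>2)"
  have split: "(\<Sum>j\<in>{a..b}. (y j - flh_ogd y B G c j)\<^sup>2 - (y j - w)\<^sup>2) = S1 + S2"
    unfolding S1_def S2_def F by (simp add: sum.distrib[symmetric])
  have ab: "{a..<b+1} = {a..b}" by auto
  have b1: "b + 1 \<le> n" using assms by simp
  have "exp (al * S1) \<le> real (b+1) * flh_v y B c al (b+1) a"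
    using meta_exp[OF assms(8) _ b1 assms(4,5,6) GB] assms(9) unfolding S1_def al_def ab[symmetric] by simp
  also have "flh_v y B c al (b+1) a \<le> 1"
  proof -
    from wprop[of "b+1" y B c al] have nn: "\<And>i. 0 \<le> flh_v y B c al (b+1) i"
      and s: "(\<Sum>i\<in>{1..b+1}. flh_v y B c al (b+1) i) = 1" by auto
    have "flh_v y B c al (b+1) a \<le> (\<Sum>i\<in>{1..b+1}. flh_v y B c al (b+1) i)"
      by (rule member_le_sum) (use assms(8,9) nn in auto)
    thus ?thesis using s by simp
  qed
  hence "real (b+1) * flh_v y B c al (b+1) a \<le> real (b+1) * 1" by (intro mult_left_mono) auto
  also have "\<dots> \<le> real n" using b1 by simp
  finally have "exp (al * S1) \<le> real n" .
  hence "ln (exp (al * S1)) \<le> ln (real n)" using assms(1) by (subst ln_le_cancel_iff) auto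
  hence "al * S1 \<le> ln (real n)" by simp
  hence S1b: "S1 \<le> 2 * K * ln (real n)" unfolding alK using Kp by (simp add: field_simps)
  define m where "m = b - a + 1"
  have am: "{a..<a+m} = {a..b}" unfolding m_def using assms(9) by auto
  have m1: "m \<ge> 1" "m \<le> n" unfolding m_def using assms by auto
  have "S2 \<le> - real m * (ogd_off y B c a m - w)^2 + (B+G)^2 * (\<Sum>k<m. 1 / (real k + 1))"
  proof -
    have hyp: "\<forall>t. a \<le> t \<and> t < a + m \<longrightarrow> \<bar>y t\<bar> \<le> G"
    proof (intro allI impI)
      fix t assume "a \<le> t \<and> t < a + m"
      hence "t \<in> {1..n}" using assms(8,9) b1 unfolding m_def by auto
      thus "\<bar>y t\<bar> \<le> G" using assms(4) by blast
    qed
    show ?thesis using mp[OF ogd_regret[OF assms(7,5,6), of a m y G] hyp] unfolding S2_def am .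
  qed
  also have "\<dots> \<le> K * (1 + ln (real m))"
  proof -
    have "- real m * (ogd_off y B c a m - w)^2 \<le> 0" by simp
    moreover have "K * (\<Sum>k<m. 1 / (real k + 1)) \<le> K * (1 + ln (real m))"
      using harm_bound[OF m1(1)] Kp by (intro mult_left_mono) auto
    ultimately show ?thesis unfolding K_def by linarith
  qed
  also have "\<dots> \<le> K * (1 + ln (real n))"
    using m1 Kp by (intro mult_left_mono) auto
  finally have S2b: "S2 \<le> K * (1 + ln (real n))" .
  have "ln (1/3::real) \<le> 1/3 - 1" by (rule ln_le_minus_one) simp
  hence l3: "ln (3::real) \<ge> 2/3" by (simp add: ln_div)
  have "ln 3 \<le> ln (real n)" using assms(1) by simp
  hence ln7: "1 \<le> 7 * ln (real n)" using l3 by simp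
  have "S1 + S2 \<le> K * (3 * ln (real n) + 1)" using S1b S2b by (simp add: algebra_simps)
  also have "\<dots> \<le> K * (10 * ln (real n))" using ln7 Kp by (intro mult_left_mono) auto
  finally show ?thesis unfolding split K_def by simp
qed



lemma t1:
  fixes A yy :: "nat \<Rightarrow> real" and cc d :: real
  assumes ab: "a \<le> b"
  shows "(\<Sum>j\<in>{a..b}. A j + (cc - d * yy j)) = (\<Sum>j\<in>{a..b}. A j) + (real (b - a + 1) * cc - d * (\<Sum>j\<in>{a..b}. yy j))"
proof -
  have "(\<Sum>j\<in>{a..b}. A j + (cc - d * yy j)) = (\<Sum>j\<in>{a..b}. A j) + ((\<Sum>j\<in>{a..b}. cc) - (\<Sum>j\<in>{a..b}. d * yy j))"
    by (simp only: sum.distrib sum_subtractf)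
  also have "(\<Sum>j\<in>{a..b}. cc) = real (b - a + 1) * cc" using ab by (simp add: Suc_diff_le)
  also have "(\<Sum>j\<in>{a..b}. d * yy j) = d * (\<Sum>j\<in>{a..b}. yy j)" by (simp only: sum_distrib_left)
  finally show ?thesis .
qed
lemma t2:
  fixes S B :: real and l :: nat
  assumes "S / real l \<ge> B" "real l > 0"
  shows "S \<ge> real l * B"
  using assms by (simp add: pos_le_divide_eq mult.commute)

lemma pt: "((yv::real) - x)^2 - (yv - ua)^2 = ((yv - x)^2 - (yv - w)^2) + ((w^2 - ua^2) - 2*(w - ua)*yv)"
  by (simp add: power2_eq_square algebra_simps)

theorem lemma6:
  fixes n a b :: nat and B G Cn c lam :: real and y u gm gp s :: "nat \<Rightarrow> real"
  assumes "n \<ge> 3" and "B \<ge> 1" and "G \<ge> B"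
    and "\<forall>t\<in>{1..n}. \<bar>y t\<bar> \<le> G"
    and "- B \<le> c" and "c \<le> B"
    and "Cn > 0"
    and "offline_opt n B Cn y u"
    and "kkt n B Cn y u lam gm gp s"
  shows "(structure1 n B u a b \<and> (\<Sum>j\<in>{a..b}. y j) / real (b - a + 1) \<ge> B \<longrightarrow>
            (\<Sum>j\<in>{a..b}. (y j - flh_ogd y B G c j)\<^sup>2 - (y j - u j)\<^sup>2)
              \<le> 10 * (B + G)\<^sup>2 * ln (real n) - real (b - a + 1) * (B - u a)\<^sup>2)
       \<and> (structure2 n B u a b \<and> (\<Sum>j\<in>{a..b}. y j) / real (b - a + 1) \<le> - B \<longrightarrow>
            (\<Sum>j\<in>{a..b}. (y j - flh_ogd y B G c j)\<^sup>2 - (y j - u j)\<^sup>2)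
              \<le> 10 * (B + G)\<^sup>2 * ln (real n) - real (b - a + 1) * (B + u a)\<^sup>2)"
proof -
  define X where "X = flh_ogd y B G c"
  have gen: "(\<Sum>j\<in>{a..b}. (y j - X j)\<^sup>2 - (y j - u j)\<^sup>2)
      = (\<Sum>j\<in>{a..b}. (y j - X j)\<^sup>2 - (y j - w)\<^sup>2)
        + (real (b - a + 1) * (w^2 - (u a)^2) - 2 * (w - u a) * (\<Sum>j\<in>{a..b}. y j))"
    if ua: "\<forall>j\<in>{a..b}. u j = u a" and ab: "a \<le> b" for w
  proof -
    have "(\<Sum>j\<in>{a..b}. (y j - X j)\<^sup>2 - (y j - u j)\<^sup>2)
       = (\<Sum>j\<in>{a..b}. ((y j - X j)\<^sup>2 - (y j - w)\<^sup>2) + ((w^2 - (u a)^2) - 2 * (w - u a) * y j))"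
    proof (rule sum.cong[OF refl])
      fix j assume "j \<in> {a..b}"
      hence "u j = u a" using ua by blast
      thus "(y j - X j)\<^sup>2 - (y j - u j)\<^sup>2 = ((y j - X j)\<^sup>2 - (y j - w)\<^sup>2) + ((w^2 - (u a)^2) - 2 * (w - u a) * y j)"
        by (simp only: pt)
    qed
    also have "\<dots> = (\<Sum>j\<in>{a..b}. (y j - X j)\<^sup>2 - (y j - w)\<^sup>2)
        + (real (b - a + 1) * (w^2 - (u a)^2) - 2 * (w - u a) * (\<Sum>j\<in>{a..b}. y j))"
      by (rule t1[OF ab])
    finally show ?thesis .
  qed
  show ?thesis
  proof (intro conjI impI)
    assume H: "structure1 n B u a b \<and> (\<Sum>j\<in>{a..b}. y j) / real (b - a + 1) \<ge> B"
    hence st: "2 \<le> a" "a \<le> b" "b \<le> n - 1" "\<forall>j\<in>{a..b}. u j = u a" "u a < B" "- B < u a"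
      unfolding structure1_def by blast+
    have lp: "real (b - a + 1) > 0" by simp
    have sy: "(\<Sum>j\<in>{a..b}. y j) \<ge> real (b - a + 1) * B" using H lp by (intro t2) auto
    have wB: "\<bar>B\<bar> \<le> B" using assms(2) by simp
    have R: "(\<Sum>j\<in>{a..b}. (y j - X j)\<^sup>2 - (y j - B)\<^sup>2) \<le> 10 * (B + G)\<^sup>2 * ln (real n)"
      unfolding X_def by (rule regret_fixed[OF assms(1-6) wB st(1-3)])
    have "2 * (B - u a) * (\<Sum>j\<in>{a..b}. y j) \<ge> 2 * (B - u a) * (real (b - a + 1) * B)"
      using sy st(5) by (intro mult_left_mono) auto
    moreover have "real (b - a + 1) * (B^2 - (u a)^2) - 2 * (B - u a) * (real (b - a + 1) * B)
        = - real (b - a + 1) * (B - u a)^2" by (simp add: power2_eq_square algebra_simps)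
    ultimately show "(\<Sum>j\<in>{a..b}. (y j - flh_ogd y B G c j)\<^sup>2 - (y j - u j)\<^sup>2)
              \<le> 10 * (B + G)\<^sup>2 * ln (real n) - real (b - a + 1) * (B - u a)\<^sup>2"
      using gen[OF st(4,2), of B] R unfolding X_def by linarith
  next
    assume H: "structure2 n B u a b \<and> (\<Sum>j\<in>{a..b}. y j) / real (b - a + 1) \<le> - B"
    hence st: "2 \<le> a" "a \<le> b" "b \<le> n - 1" "\<forall>j\<in>{a..b}. u j = u a" "u a < B" "- B < u a"
      unfolding structure2_def by blast+
    have lp: "real (b - a + 1) > 0" by simp
    have sy: "(\<Sum>j\<in>{a..b}. y j) \<le> real (b - a + 1) * (- B)" using H lp by (simp add: pos_divide_le_eq mult.commute)
    have wB: "\<bar>- B\<bar> \<le> B" using assms(2) by simp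
    have R: "(\<Sum>j\<in>{a..b}. (y j - X j)\<^sup>2 - (y j - (- B))\<^sup>2) \<le> 10 * (B + G)\<^sup>2 * ln (real n)"
      unfolding X_def by (rule regret_fixed[OF assms(1-6) wB st(1-3)])
    have "(B + u a) * (\<Sum>j\<in>{a..b}. y j) \<le> (B + u a) * (real (b - a + 1) * (- B))"
      using sy st(6) by (intro mult_left_mono) auto
    moreover have "real (b - a + 1) * ((-B)^2 - (u a)^2) + 2 * (B + u a) * (real (b - a + 1) * (- B))
        = - real (b - a + 1) * (B + u a)^2" by (simp add: power2_eq_square algebra_simps)
    moreover have "2 * (- B - u a) * (\<Sum>j\<in>{a..b}. y j) = - (2 * ((B + u a) * (\<Sum>j\<in>{a..b}. y j)))"
      by (simp add: algebra_simps)
    moreover have "2 * (B + u a) * (real (b - a + 1) * (- B)) = 2 * ((B + u a) * (real (b - a + 1) * (- B)))"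
      by simp
    ultimately show "(\<Sum>j\<in>{a..b}. (y j - flh_ogd y B G c j)\<^sup>2 - (y j - u j)\<^sup>2)
              \<le> 10 * (B + G)\<^sup>2 * ln (real n) - real (b - a + 1) * (B + u a)\<^sup>2"
      using gen[OF st(4,2), of "- B"] R unfolding X_def by linarith
  qed
qed


end
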